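(* For all $s,s^*\in\mathbb R$, $$(s-s^* )\big(\mathrm{shrink}(s)-\mathrm{shrink}(s^* )\big)\ge\frac{|\mathrm{shrink}(s^* )|}{|\mathrm{shrink}(s^* )|+2}(s-s^* )^2\ge0,$$ and the first inequality holds with equality when $s=-\mathrm{sign}(s^* )$.
   Context: $\mathrm{shrink}(s):=\mathrm{sign}(s)\max\{|s|-1,0\}$ (soft-thresholding with threshold $1$). *)

theory Defs
  imports Complex_Main
begin

definition shrink :: "real \<Rightarrow> real" where
  "shrink s = sgn s * max (\<bar>s\<bar> - 1) 0"

end

theory Submission
  imports Defs
begin
lemma sh: "shrink s = (if s \<ge> 1 then s - 1 else if s \<le> -1 then s + 1 else 0)"
  by (auto simp: shrink_def sgn_if)

lemma keyp: fixes s t :: real assumes "t > 1"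
  shows "(\<bar>shrink t\<bar> + 2) * ((s - t) * (shrink s - shrink t)) \<ge> \<bar>shrink t\<bar> * (s - t)\<^sup>2"
proof -
  have a: "\<bar>shrink t\<bar> = t - 1" "shrink t = t - 1" using assms by (auto simp: sh)
  consider "s \<ge> 1" | "-1 < s" "s < 1" | "s \<le> -1" by linarith
  then show ?thesis
  proof cases
    case 1 then have b: "shrink s = s - 1" by (simp add: sh)
    note b = this
    moreover have "0 \<le> 2 * (s - t)\<^sup>2" by simp
    ultimately show ?thesis unfolding a b using assms by (simp add: power2_eq_square algebra_simps abs_of_pos)
  next
    case 2 then have b: "shrink s = 0" by (simp add: sh)
    note b = this
    moreover have "(t - 1) * ((t - s) * (t + 1 - (t - s))) \<ge> 0"
      using 2 assms by (intro mult_nonneg_nonneg) auto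
    ultimately show ?thesis unfolding a b using assms by (simp add: power2_eq_square algebra_simps abs_of_pos)
  next
    case 3 then have b: "shrink s = s + 1" by (simp add: sh)
    note b = this
    moreover have "(t - s) * (-(s + 1)) \<ge> 0"
      using 3 assms by (intro mult_nonneg_nonneg) auto
    ultimately show ?thesis unfolding a b using assms by (simp add: power2_eq_square algebra_simps abs_of_pos)
  qed
qed

lemma shneg: "shrink (-x) = - shrink x" by (simp add: sh)

lemma key: fixes s t :: real
  shows "(\<bar>shrink t\<bar> + 2) * ((s - t) * (shrink s - shrink t)) \<ge> \<bar>shrink t\<bar> * (s - t)\<^sup>2"
proof -
  consider "t > 1" | "t < -1" | "\<bar>t\<bar> \<le> 1" by linarith
  then show ?thesis
  proof cases
    case 1 then show ?thesis by (rule keyp)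
  next
    case 2
    have "(\<bar>shrink (-t)\<bar> + 2) * ((-s - -t) * (shrink (-s) - shrink (-t))) \<ge> \<bar>shrink (-t)\<bar> * (-s - -t)\<^sup>2"
      using 2 by (intro keyp) auto
    then show ?thesis unfolding shneg by (simp add: power2_eq_square algebra_simps)
  next
    case 3
    then have b: "shrink t = 0" by (auto simp: sh)
    have "(s - t) * shrink s \<ge> 0"
      using 3 by (auto simp: sh intro: mult_nonneg_nonneg mult_nonpos_nonpos)
    then show ?thesis unfolding b by simp
  qed
qed

lemma eqc: fixes t :: real
  shows "(- sgn t - t) * (shrink (- sgn t) - shrink t)
     = \<bar>shrink t\<bar> / (\<bar>shrink t\<bar> + 2) * (- sgn t - t)\<^sup>2"
proof -
  consider "t > 1" | "t < -1" | "\<bar>t\<bar> \<le> 1" by linarith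
  then show ?thesis
  proof cases
    case 1
    then have e: "shrink t = t - 1" "sgn t = 1" "shrink (-1) = 0" by (auto simp: sh)
    show ?thesis unfolding e using 1 by (simp add: power2_eq_square field_simps)
  next
    case 2
    then have e: "shrink t = t + 1" "sgn t = -1" "shrink 1 = 0" by (auto simp: sh)
    show ?thesis unfolding e using 2 by (simp add: e power2_eq_square field_simps)
  next
    case 3
    then have "shrink t = 0" "shrink (- sgn t) = 0" by (auto simp: sh sgn_if)
    then show ?thesis by simp
  qed
qed

theorem mainTheorem16:
  fixes s s_star :: real
  shows "(s - s_star) * (shrink s - shrink s_star)
           \<ge> \<bar>shrink s_star\<bar> / (\<bar>shrink s_star\<bar> + 2) * (s - s_star)\<^sup>2
       \<and> \<bar>shrink s_star\<bar> / (\<bar>shrink s_star\<bar> + 2) * (s - s_star)\<^sup>2 \<ge> 0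
       \<and> (s = - sgn s_star \<longrightarrow>
            (s - s_star) * (shrink s - shrink s_star)
              = \<bar>shrink s_star\<bar> / (\<bar>shrink s_star\<bar> + 2) * (s - s_star)\<^sup>2)"
proof (intro conjI impI)
  have p: "\<bar>shrink s_star\<bar> + 2 > 0" by simp
  show "(s - s_star) * (shrink s - shrink s_star)
           \<ge> \<bar>shrink s_star\<bar> / (\<bar>shrink s_star\<bar> + 2) * (s - s_star)\<^sup>2"
    using key[of s_star s] p by (simp add: divide_le_eq mult.commute)
  show "\<bar>shrink s_star\<bar> / (\<bar>shrink s_star\<bar> + 2) * (s - s_star)\<^sup>2 \<ge> 0" by simp
  assume "s = - sgn s_star"
  then show "(s - s_star) * (shrink s - shrink s_star)
              = \<bar>shrink s_star\<bar> / (\<bar>shrink s_star\<bar> + 2) * (s - s_star)\<^sup>2"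
    using eqc by simp
qed

end
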